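(* Let $S$ and $T$ be semigroups and let $S\ast T$ be their semigroup free product. Then $S\ast T$ is $U(\mathrm{CF})$ if and only if both $S$ and $T$ are $U(\mathrm{CF})$. (That is, the class of $U(\mathrm{CF})$ semigroups is closed under semigroup free products and under taking free factors.)
   Context: For a semigroup $S$ generated by a finite set $A$, $\mathrm{WP}(S,A)=\{u\#v^{\mathrm{rev}} : u,v\in A^+,\ u=_S v\}$, where $\#\notin A$ and $v^{\mathrm{rev}}$ is the reversal of $v$. A semigroup is $U(\mathrm{CF})$ if it is finitely generated and its word problem with respect to some (equivalently any) finite generating set is context-free. *)

theory Defs
  imports Main
begin

record 'a sgrp =
  carr :: "'a set"
  mul  :: "'a \<Rightarrow> 'a \<Rightarrow> 'a"

definition semigrp :: "'a sgrp \<Rightarrow> bool" where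
  "semigrp S \<longleftrightarrow>
     (\<forall>x\<in>carr S. \<forall>y\<in>carr S. mul S x y \<in> carr S) \<and>
     (\<forall>x\<in>carr S. \<forall>y\<in>carr S. \<forall>z\<in>carr S. mul S (mul S x y) z = mul S x (mul S y z))"

definition word_eval :: "'a sgrp \<Rightarrow> 'a list \<Rightarrow> 'a" where
  "word_eval S w = foldl (mul S) (hd w) (tl w)"

definition generates :: "'a sgrp \<Rightarrow> 'a set \<Rightarrow> bool" where
  "generates S A \<longleftrightarrow> A \<subseteq> carr S \<and>
     (\<forall>s\<in>carr S. \<exists>w. w \<noteq> [] \<and> set w \<subseteq> A \<and> word_eval S w = s)"

text \<open>A grammar is a set of productions (A, alpha), nonterminals Inl, terminals Inr.\<close>
definition cfg_step :: "('n \<times> ('n + 't) list) set \<Rightarrow> ('n + 't) list \<Rightarrow> ('n + 't) list \<Rightarrow> bool" where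
  "cfg_step P u v \<longleftrightarrow> (\<exists>l A r \<alpha>. u = l @ [Inl A] @ r \<and> (A, \<alpha>) \<in> P \<and> v = l @ \<alpha> @ r)"

definition cfg_lang :: "('n \<times> ('n + 't) list) set \<Rightarrow> 'n \<Rightarrow> 't list set" where
  "cfg_lang P S0 = {w. (cfg_step P)\<^sup>*\<^sup>* [Inl S0] (map Inr w)}"

text \<open>Context-free: generated by a finite grammar (nonterminals w.l.o.g. natural numbers).\<close>
definition context_free :: "'t list set \<Rightarrow> bool" where
  "context_free L \<longleftrightarrow> (\<exists>(P :: (nat \<times> (nat + 't) list) set) S0. finite P \<and> cfg_lang P S0 = L)"

text \<open>Alphabet A with the extra symbol # encoded as None.\<close>
definition WP :: "'a sgrp \<Rightarrow> 'a set \<Rightarrow> 'a option list set" where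
  "WP S A = {map Some u @ [None] @ rev (map Some v) | u v.
               u \<noteq> [] \<and> v \<noteq> [] \<and> set u \<subseteq> A \<and> set v \<subseteq> A \<and> word_eval S u = word_eval S v}"

definition U_CF :: "'a sgrp \<Rightarrow> bool" where
  "U_CF S \<longleftrightarrow> (\<exists>A. finite A \<and> generates S A \<and> context_free (WP S A))"

section \<open>Semigroup free product (normal forms: nonempty alternating sequences)\<close>

definition fp_carr :: "'a sgrp \<Rightarrow> 'b sgrp \<Rightarrow> ('a + 'b) list set" where
  "fp_carr S T = {xs. xs \<noteq> [] \<and>
      (\<forall>x\<in>set xs. case x of Inl a \<Rightarrow> a \<in> carr S | Inr b \<Rightarrow> b \<in> carr T) \<and>
      (\<forall>i. Suc i < length xs \<longrightarrow> isl (xs ! i) \<noteq> isl (xs ! Suc i))}"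

definition fp_mul :: "'a sgrp \<Rightarrow> 'b sgrp \<Rightarrow> ('a + 'b) list \<Rightarrow> ('a + 'b) list \<Rightarrow> ('a + 'b) list" where
  "fp_mul S T xs ys =
     (if xs = [] then ys else if ys = [] then xs else
      (case (last xs, hd ys) of
         (Inl a, Inl b) \<Rightarrow> butlast xs @ [Inl (mul S a b)] @ tl ys
       | (Inr a, Inr b) \<Rightarrow> butlast xs @ [Inr (mul T a b)] @ tl ys
       | _ \<Rightarrow> xs @ ys))"

definition free_prod :: "'a sgrp \<Rightarrow> 'b sgrp \<Rightarrow> ('a + 'b) list sgrp" where
  "free_prod S T = \<lparr> carr = fp_carr S T, mul = fp_mul S T \<rparr>"

end

theory Submission
  imports Defs
begin

lemma step_ctx: "cfg_step P u v \<Longrightarrow> cfg_step P (l @ u @ r) (l @ v @ r)"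
  unfolding cfg_step_def by (metis append.assoc)

lemma steps_ctx: "(cfg_step P)\<^sup>*\<^sup>* u v \<Longrightarrow> (cfg_step P)\<^sup>*\<^sup>* (l @ u @ r) (l @ v @ r)"
  by (induction rule: rtranclp_induct) (auto intro: rtranclp.rtrancl_into_rtrancl step_ctx)

lemma steps_app: "(cfg_step P)\<^sup>*\<^sup>* u1 v1 \<Longrightarrow> (cfg_step P)\<^sup>*\<^sup>* u2 v2 \<Longrightarrow> (cfg_step P)\<^sup>*\<^sup>* (u1 @ u2) (v1 @ v2)"
proof -
  assume a: "(cfg_step P)\<^sup>*\<^sup>* u1 v1" and b: "(cfg_step P)\<^sup>*\<^sup>* u2 v2"
  have "(cfg_step P)\<^sup>*\<^sup>* ([] @ u1 @ u2) ([] @ v1 @ u2)" by (rule steps_ctx[OF a])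
  moreover have "(cfg_step P)\<^sup>*\<^sup>* (v1 @ u2 @ []) (v1 @ v2 @ [])" by (rule steps_ctx[OF b])
  ultimately show ?thesis by simp
qed

lemma split3: "l @ [x] @ r = w1 @ w2 \<Longrightarrow>
   (\<exists>r1. w1 = l @ [x] @ r1 \<and> r = r1 @ w2) \<or> (\<exists>l2. w2 = l2 @ [x] @ r \<and> l = w1 @ l2)"
  by (auto simp: append_eq_append_conv2 Cons_eq_append_conv)

lemma split_pow: "(cfg_step P ^^ k) (u1 @ u2) v \<Longrightarrow>
  \<exists>v1 v2 k1 k2. v = v1 @ v2 \<and> (cfg_step P ^^ k1) u1 v1 \<and> (cfg_step P ^^ k2) u2 v2 \<and> k1 + k2 = k"
proof (induction k arbitrary: v)
  case 0
  then show ?case by auto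
next
  case (Suc k)
  from Suc.prems obtain w where w: "(cfg_step P ^^ k) (u1 @ u2) w" "cfg_step P w v"
    by (auto elim: relpowp_Suc_E)
  from Suc.IH[OF w(1)] obtain w1 w2 k1 k2 where h: "w = w1 @ w2" "(cfg_step P ^^ k1) u1 w1"
    "(cfg_step P ^^ k2) u2 w2" "k1 + k2 = k" by blast
  from w(2) obtain l A r \<alpha> where s: "w = l @ [Inl A] @ r" "(A, \<alpha>) \<in> P" "v = l @ \<alpha> @ r"
    unfolding cfg_step_def by blast
  have "(\<exists>r1. w1 = l @ [Inl A] @ r1 \<and> r = r1 @ w2) \<or> (\<exists>l2. w2 = l2 @ [Inl A] @ r \<and> l = w1 @ l2)"
    using split3[of l "Inl A" r w1 w2] s(1) h(1) by simp
  then show ?case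
  proof (elim disjE exE conjE)
    fix r1 assume r1: "w1 = l @ [Inl A] @ r1" "r = r1 @ w2"
    have "cfg_step P w1 (l @ \<alpha> @ r1)" using r1 s unfolding cfg_step_def by blast
    hence "(cfg_step P ^^ Suc k1) u1 (l @ \<alpha> @ r1)" using h(2) by (rule relpowp_Suc_I[rotated])
    then show ?thesis using h r1 s by (intro exI[of _ "l @ \<alpha> @ r1"] exI[of _ w2] exI[of _ "Suc k1"] exI[of _ k2]) auto
  next
    fix l2 assume l2: "w2 = l2 @ [Inl A] @ r" "l = w1 @ l2"
    have "cfg_step P w2 (l2 @ \<alpha> @ r)" using l2 s unfolding cfg_step_def by blast
    hence "(cfg_step P ^^ Suc k2) u2 (l2 @ \<alpha> @ r)" using h(3) by (rule relpowp_Suc_I[rotated])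
    then show ?thesis using h l2 s by (intro exI[of _ w1] exI[of _ "l2 @ \<alpha> @ r"] exI[of _ k1] exI[of _ "Suc k2"]) auto
  qed
qed

lemma term_pow: "(cfg_step P ^^ k) (map Inr w) v \<Longrightarrow> v = map Inr w"
proof (induction k arbitrary: v)
  case 0 then show ?case by auto
next
  case (Suc k)
  then obtain y where "(cfg_step P ^^ k) (map Inr w) y" "cfg_step P y v" by (auto elim: relpowp_Suc_E)
  with Suc.IH have "cfg_step P (map Inr w) v" by auto
  then show ?case unfolding cfg_step_def
    by (metis Inl_Inr_False append_Cons ex_map_conv in_set_conv_decomp)
qed

lemma first_pow: "(cfg_step P ^^ k) [Inl X] (map Inr w) \<Longrightarrow>
   \<exists>k' \<alpha>. k = Suc k' \<and> (X, \<alpha>) \<in> P \<and> (cfg_step P ^^ k') \<alpha> (map Inr w)"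
proof (cases k)
  case 0
  assume "(cfg_step P ^^ k) [Inl X] (map Inr w)"
  with 0 show ?thesis by (cases w) auto
next
  case (Suc k')
  assume "(cfg_step P ^^ k) [Inl X] (map Inr w)"
  with Suc obtain y where "cfg_step P [Inl X] y" "(cfg_step P ^^ k') y (map Inr w)"
    using relpowp_Suc_D2 by metis
  moreover from this(1) obtain \<alpha> where "(X, \<alpha>) \<in> P" "y = \<alpha>"
    unfolding cfg_step_def by (auto simp: Cons_eq_append_conv)
  ultimately show ?thesis using Suc by auto
qed

lemma emb_step:
  assumes emb: "\<And>n. emb (Inl n) = Inl (e n)"
    and H: "\<And>A \<alpha>. (A, \<alpha>) \<in> P \<Longrightarrow> (e A, map emb \<alpha>) \<in> Q"
  shows "cfg_step P u v \<Longrightarrow> cfg_step Q (map emb u) (map emb v)"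
  unfolding cfg_step_def
proof (elim exE conjE)
  fix l A r \<alpha> assume "u = l @ [Inl A] @ r" "(A, \<alpha>) \<in> P" "v = l @ \<alpha> @ r"
  then show "\<exists>l A r \<alpha>. map emb u = l @ [Inl A] @ r \<and> (A, \<alpha>) \<in> Q \<and> map emb v = l @ \<alpha> @ r"
    using H emb by (intro exI[of _ "map emb l"] exI[of _ "e A"] exI[of _ "map emb r"] exI[of _ "map emb \<alpha>"]) auto
qed

lemma emb_steps:
  assumes emb: "\<And>n. emb (Inl n) = Inl (e n)"
    and H: "\<And>A \<alpha>. (A, \<alpha>) \<in> P \<Longrightarrow> (e A, map emb \<alpha>) \<in> Q"
  shows "(cfg_step P)\<^sup>*\<^sup>* u v \<Longrightarrow> (cfg_step Q)\<^sup>*\<^sup>* (map emb u) (map emb v)"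
  by (induction rule: rtranclp_induct) (auto intro: rtranclp.rtrancl_into_rtrancl emb_step[OF emb H])

lemma back_emb:
  fixes t :: "'c \<Rightarrow> nat + 'd" and Q :: "(nat \<times> (nat + 'd) list) set"
    and P :: "(nat \<times> (nat + 'c) list) set"
  assumes H: "\<And>X \<alpha>. (e X, \<alpha>) \<in> Q \<Longrightarrow> \<exists>\<alpha>1. (X, \<alpha>1) \<in> P \<and> \<alpha> = map (case_sum (Inl \<circ> e) t) \<alpha>1"
  shows "(cfg_step Q ^^ k) (map (case_sum (Inl \<circ> e) t) \<gamma>) (map Inr w) \<Longrightarrow>
    \<exists>z ws. (cfg_step P)\<^sup>*\<^sup>* \<gamma> (map Inr z) \<and>
       list_all2 (\<lambda>c wc. \<exists>k'\<le>k. (cfg_step Q ^^ k') [t c] (map Inr wc)) z ws \<and> w = concat ws"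
proof (induction k arbitrary: \<gamma> w rule: less_induct)
  case (less k)
  let ?emb = "case_sum (Inl \<circ> e) t"
  let ?R = "\<lambda>c wc. \<exists>k'\<le>k. (cfg_step Q ^^ k') [t c] (map Inr wc)"
  have "\<forall>j w. j \<le> k \<longrightarrow> (cfg_step Q ^^ j) (map ?emb \<gamma>') (map Inr w) \<longrightarrow>
    (\<exists>z ws. (cfg_step P)\<^sup>*\<^sup>* \<gamma>' (map Inr z) \<and> list_all2 ?R z ws \<and> w = concat ws)" for \<gamma>'
  proof (induction \<gamma>')
    case Nil
    show ?case
    proof (intro allI impI)
      fix j w assume "(cfg_step Q ^^ j) (map ?emb []) (map Inr w)"
      then have "(cfg_step Q ^^ j) (map Inr []) (map Inr w)" by simp
      from term_pow[OF this] have "w = []" by simp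
      then show "\<exists>z ws. (cfg_step P)\<^sup>*\<^sup>* [] (map Inr z) \<and> list_all2 ?R z ws \<and> w = concat ws"
        by (intro exI[of _ "[]"] exI[of _ "[]"]) auto
    qed
  next
    case (Cons g \<gamma>)
    show ?case
    proof (intro allI impI)
      fix j w assume jk: "j \<le> k" and der: "(cfg_step Q ^^ j) (map ?emb (g # \<gamma>)) (map Inr w)"
      have der': "(cfg_step Q ^^ j) ([?emb g] @ map ?emb \<gamma>) (map Inr w)" using der by simp
      from split_pow[OF der'] obtain v1 v2 k1 k2 where
        sp: "map Inr w = v1 @ v2" "(cfg_step Q ^^ k1) [?emb g] v1" "(cfg_step Q ^^ k2) (map ?emb \<gamma>) v2" "k1 + k2 = j"
        by auto
      from sp(1) obtain w1 w2 where ww: "w = w1 @ w2" "v1 = map Inr w1" "v2 = map Inr w2"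
        by (auto simp: map_eq_append_conv)
      from Cons.IH sp(3) ww(3) sp(4) jk obtain z2 ws2 where
        r2: "(cfg_step P)\<^sup>*\<^sup>* \<gamma> (map Inr z2)" "list_all2 ?R z2 ws2" "w2 = concat ws2"
        using le_add2 order_trans by blast
      have "\<exists>z1 ws1. (cfg_step P)\<^sup>*\<^sup>* [g] (map Inr z1) \<and> list_all2 ?R z1 ws1 \<and> w1 = concat ws1"
      proof (cases g)
        case (Inl X)
        with sp(2) ww(2) have "(cfg_step Q ^^ k1) [Inl (e X)] (map Inr w1)" by simp
        from first_pow[OF this] obtain k' \<alpha> where f: "k1 = Suc k'" "(e X, \<alpha>) \<in> Q"
          "(cfg_step Q ^^ k') \<alpha> (map Inr w1)" by blast
        from H[OF f(2)] obtain \<alpha>1 where a1: "(X, \<alpha>1) \<in> P" "\<alpha> = map ?emb \<alpha>1" by blast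
        have kk: "k' < k" using f(1) sp(4) jk by simp
        from less.IH[OF kk, of \<alpha>1 w1] f(3) a1(2) obtain z ws where
          r: "(cfg_step P)\<^sup>*\<^sup>* \<alpha>1 (map Inr z)"
          "list_all2 (\<lambda>c wc. \<exists>k''\<le>k'. (cfg_step Q ^^ k'') [t c] (map Inr wc)) z ws" "w1 = concat ws"
          by blast
        have "list_all2 ?R z ws" using r(2)
          by (rule list_all2_mono) (use kk in \<open>meson less_imp_le order_trans\<close>)
        moreover have "cfg_step P [g] \<alpha>1" unfolding cfg_step_def using a1(1) Inl
          by (intro exI[of _ "[]"] exI[of _ X] exI[of _ "[]"] exI[of _ \<alpha>1]) simp
        moreover have "(cfg_step P)\<^sup>*\<^sup>* [g] (map Inr z)"
          using calculation(2) r(1) by (rule converse_rtranclp_into_rtranclp)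
        ultimately show ?thesis using r(3) by blast
      next
        case (Inr c)
        have "(cfg_step Q ^^ k1) [t c] (map Inr w1)" using sp(2) ww(2) Inr by simp
        moreover have "k1 \<le> k" using sp(4) jk by simp
        ultimately have "list_all2 ?R [c] [w1]" by auto
        then show ?thesis using Inr by (intro exI[of _ "[c]"] exI[of _ "[w1]"]) auto
      qed
      then obtain z1 ws1 where r1: "(cfg_step P)\<^sup>*\<^sup>* [g] (map Inr z1)" "list_all2 ?R z1 ws1" "w1 = concat ws1"
        by blast
      have "(cfg_step P)\<^sup>*\<^sup>* ([g] @ \<gamma>) (map Inr z1 @ map Inr z2)" by (rule steps_app[OF r1(1) r2(1)])
      then show "\<exists>z ws. (cfg_step P)\<^sup>*\<^sup>* (g # \<gamma>) (map Inr z) \<and> list_all2 ?R z ws \<and> w = concat ws"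
        using r1 r2 ww(1)
        by (intro exI[of _ "z1 @ z2"] exI[of _ "ws1 @ ws2"]) (auto intro: list_all2_appendI)
    qed
  qed
  then show ?case using less.prems by blast
qed

lemma inv_steps:
  fixes h :: "nat + 'c \<Rightarrow> nat + 'd"
  assumes hl: "\<And>n. h (Inl n) = Inl n"
    and P'def: "P' = {(X, \<beta>). (X, map h \<beta>) \<in> P}"
    and hr: "\<And>c n. h (Inr c) \<noteq> Inl n"
  shows "(cfg_step P)\<^sup>*\<^sup>* x (map h y') \<Longrightarrow> \<exists>x'. x = map h x' \<and> (cfg_step P')\<^sup>*\<^sup>* x' y'"
proof (induction rule: converse_rtranclp_induct)
  case base
  then show ?case by blast
next
  case (step x x1)
  from step.IH obtain x1' where x1: "x1 = map h x1'" "(cfg_step P')\<^sup>*\<^sup>* x1' y'" by blast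
  from step.hyps(1) obtain l A r \<alpha> where s: "x = l @ [Inl A] @ r" "(A, \<alpha>) \<in> P" "x1 = l @ \<alpha> @ r"
    unfolding cfg_step_def by blast
  from s(3) x1(1) obtain l' \<alpha>' r' where d: "x1' = l' @ \<alpha>' @ r'" "l = map h l'" "\<alpha> = map h \<alpha>'" "r = map h r'"
    by (metis map_eq_append_conv)
  have "(A, \<alpha>') \<in> P'" using P'def s(2) d(3) by simp
  then have "cfg_step P' (l' @ [Inl A] @ r') x1'" unfolding cfg_step_def using d(1) by blast
  moreover have "x = map h (l' @ [Inl A] @ r')" using s(1) d hl by simp
  ultimately show ?case using x1(2)
    by (intro exI[of _ "l' @ [Inl A] @ r'"]) (simp add: converse_rtranclp_into_rtranclp)
qed

lemma fwd_steps:
  fixes h :: "nat + 'c \<Rightarrow> nat + 'd"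
  assumes hl: "\<And>n. h (Inl n) = Inl n"
    and P'def: "P' = {(X, \<beta>). (X, map h \<beta>) \<in> P}"
  shows "(cfg_step P')\<^sup>*\<^sup>* x y \<Longrightarrow> (cfg_step P)\<^sup>*\<^sup>* (map h x) (map h y)"
proof -
  have "\<And>A \<alpha>. (A, \<alpha>) \<in> P' \<Longrightarrow> (id A, map h \<alpha>) \<in> P" using P'def by simp
  from emb_steps[of h id P' P, OF _ this] hl show "(cfg_step P')\<^sup>*\<^sup>* x y \<Longrightarrow> (cfg_step P)\<^sup>*\<^sup>* (map h x) (map h y)"
    by simp
qed

lemma cf_inv_map:
  fixes g :: "'c \<Rightarrow> 'd"
  assumes "inj g" "context_free L"
  shows "context_free {w. map g w \<in> L}"
proof -
  from assms(2) obtain P :: "(nat \<times> (nat + 'd) list) set" and S0 where P: "finite P" "cfg_lang P S0 = L"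
    unfolding context_free_def by blast
  define h :: "nat + 'c \<Rightarrow> nat + 'd" where "h = map_sum id g"
  define P' :: "(nat \<times> (nat + 'c) list) set" where "P' = {(X, \<beta>). (X, map h \<beta>) \<in> P}"
  have hl: "\<And>n. h (Inl n) = Inl n" and hr: "\<And>c n. h (Inr c) \<noteq> Inl n" by (auto simp: h_def)
  have "inj h" unfolding inj_def
  proof (intro allI impI)
    fix x y assume "h x = h y" then show "x = y" using assms(1)
      by (cases x; cases y) (auto simp: h_def inj_eq)
  qed
  then have "inj (\<lambda>(X, \<beta>). (X, map h \<beta>))" by (auto simp: inj_def inj_map_eq_map)
  moreover have "P' = (\<lambda>(X, \<beta>). (X, map h \<beta>)) -` P" by (auto simp: P'_def)
  ultimately have "finite P'" using P(1) by (metis finite_vimageI)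
  moreover have "cfg_lang P' S0 = {w. map g w \<in> L}"
  proof (intro set_eqI iffI; simp)
    fix w assume "w \<in> cfg_lang P' S0"
    then have "(cfg_step P')\<^sup>*\<^sup>* [Inl S0] (map Inr w)" by (simp add: cfg_lang_def)
    from fwd_steps[OF hl P'_def this] have "(cfg_step P)\<^sup>*\<^sup>* [Inl S0] (map Inr (map g w))"
      by (simp add: h_def comp_def)
    then have "map g w \<in> cfg_lang P S0" unfolding cfg_lang_def by simp
    then show "map g w \<in> L" using P(2) by simp
  next
    fix w assume "map g w \<in> L"
    then have "map g w \<in> cfg_lang P S0" using P(2) by simp
    then have der: "(cfg_step P)\<^sup>*\<^sup>* [Inl S0] (map h (map Inr w))" 
      by (simp add: cfg_lang_def h_def comp_def)
    have "\<exists>x'. [Inl S0] = map h x' \<and> (cfg_step P')\<^sup>*\<^sup>* x' (map Inr w)"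
      by (rule inv_steps[OF hl P'_def hr der])
    then obtain x' where "[Inl S0] = map h x' \<and> (cfg_step P')\<^sup>*\<^sup>* x' (map Inr w)"
      by (rule exE)
    moreover from this have "x' = [Inl S0]" using hl \<open>inj h\<close>
      by (cases x') (auto, metis injD)
    ultimately show "w \<in> cfg_lang P' S0" by (simp add: cfg_lang_def)
  qed
  ultimately show ?thesis unfolding context_free_def by blast
qed

lemma fpm_Inl[simp]: "fp_mul S T [Inl a] [Inl b] = [Inl (mul S a b)]"
  by (simp add: fp_mul_def)
lemma fpm_Inr[simp]: "fp_mul S T [Inr a] [Inr b] = [Inr (mul T a b)]"
  by (simp add: fp_mul_def)
lemma fpm_LR[simp]: "fp_mul S T [Inl a] [Inr b] = [Inl a, Inr b]"
  by (simp add: fp_mul_def)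
lemma fpm_RL[simp]: "fp_mul S T [Inr a] [Inl b] = [Inr a, Inl b]"
  by (simp add: fp_mul_def)

lemma fpm_ne: "acc \<noteq> [] \<Longrightarrow> fp_mul S T acc y \<noteq> []"
  by (auto simp: fp_mul_def split: sum.split)

lemma fpm_app: "acc \<noteq> [] \<Longrightarrow> y \<noteq> [] \<Longrightarrow> fp_mul S T (p @ acc) y = p @ fp_mul S T acc y"
  by (auto simp: fp_mul_def butlast_append split: sum.split)

lemma foldl_ne: "acc \<noteq> [] \<Longrightarrow> foldl (fp_mul S T) acc ys \<noteq> []"
  by (induction ys arbitrary: acc) (auto simp: fpm_ne)

lemma foldl_app: "acc \<noteq> [] \<Longrightarrow> (\<forall>y\<in>set ys. y \<noteq> []) \<Longrightarrow>
   foldl (fp_mul S T) (p @ acc) ys = p @ foldl (fp_mul S T) acc ys"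
  by (induction ys arbitrary: acc) (auto simp: fpm_app fpm_ne)

lemma foldl_Inl: "foldl (fp_mul S T) [Inl a] (map (\<lambda>x. [Inl x]) u) = [Inl (foldl (mul S) a u)]"
  by (induction u arbitrary: a) auto
lemma foldl_Inr: "foldl (fp_mul S T) [Inr a] (map (\<lambda>x. [Inr x]) u) = [Inr (foldl (mul T) a u)]"
  by (induction u arbitrary: a) auto

definition fval :: "'a sgrp \<Rightarrow> 'b sgrp \<Rightarrow> ('a + 'b) list \<Rightarrow> ('a + 'b) list" where
  "fval S T x = word_eval (free_prod S T) (map (\<lambda>c. [c]) x)"

lemma fval_Cons: "fval S T (c # x) = foldl (fp_mul S T) [c] (map (\<lambda>c. [c]) x)"
  by (simp add: fval_def word_eval_def free_prod_def)

lemma fval_ne: "x \<noteq> [] \<Longrightarrow> fval S T x \<noteq> []"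
  by (cases x) (auto simp: fval_Cons foldl_ne)

lemma map_Inl_sg: "map (\<lambda>c. [c]) (map Inl u) = map (\<lambda>x. [Inl x]) u" by simp
lemma map_Inr_sg: "map (\<lambda>c. [c]) (map Inr u) = map (\<lambda>x. [Inr x]) u" by simp

lemma fval_Inl_only: "u \<noteq> [] \<Longrightarrow> fval S T (map Inl u) = [Inl (word_eval S u)]"
proof -
  assume "u \<noteq> []"
  then obtain a l where u: "u = a # l" by (cases u) auto
  show ?thesis unfolding u by (simp only: fval_Cons list.map map_Inl_sg foldl_Inl, simp add: word_eval_def)
qed
lemma fval_Inr_only: "u \<noteq> [] \<Longrightarrow> fval S T (map Inr u) = [Inr (word_eval T u)]"
proof -
  assume "u \<noteq> []"
  then obtain a l where u: "u = a # l" by (cases u) auto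
  show ?thesis unfolding u by (simp only: fval_Cons list.map map_Inr_sg foldl_Inr, simp add: word_eval_def)
qed

lemma fval_Inl_cons:
  assumes "u \<noteq> []" "x' \<noteq> []" "\<not> isl (hd x')"
  shows "fval S T (map Inl u @ x') = Inl (word_eval S u) # fval S T x'"
proof -
  obtain a u0 where u: "u = a # u0" using assms(1) by (cases u) auto
  obtain b x'' where x: "x' = Inr b # x''" using assms(2,3) by (metis list.collapse sum.collapse(2))
  have "fval S T (map Inl u @ x') = foldl (fp_mul S T) (foldl (fp_mul S T) [Inl a] (map (\<lambda>x. [Inl x]) u0)) (map (\<lambda>c. [c]) x')"
    by (simp add: u fval_Cons del: map_map) (simp add: map_Inl_sg del: map_map)
  also have "\<dots> = foldl (fp_mul S T) ([Inl (word_eval S u)] @ [Inr b]) (map (\<lambda>c. [c]) x'')"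
    by (simp add: foldl_Inl u x word_eval_def)
  also have "\<dots> = [Inl (word_eval S u)] @ foldl (fp_mul S T) [Inr b] (map (\<lambda>c. [c]) x'')"
    by (rule foldl_app) auto
  also have "\<dots> = Inl (word_eval S u) # fval S T x'" by (simp add: x fval_Cons)
  finally show ?thesis .
qed

lemma fval_Inr_cons:
  assumes "u \<noteq> []" "x' \<noteq> []" "isl (hd x')"
  shows "fval S T (map Inr u @ x') = Inr (word_eval T u) # fval S T x'"
proof -
  obtain a u0 where u: "u = a # u0" using assms(1) by (cases u) auto
  obtain b x'' where x: "x' = Inl b # x''" using assms(2,3) by (metis list.collapse sum.collapse(1))
  have "fval S T (map Inr u @ x') = foldl (fp_mul S T) (foldl (fp_mul S T) [Inr a] (map (\<lambda>x. [Inr x]) u0)) (map (\<lambda>c. [c]) x')"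
    by (simp add: u fval_Cons del: map_map) (simp add: map_Inr_sg del: map_map)
  also have "\<dots> = foldl (fp_mul S T) ([Inr (word_eval T u)] @ [Inl b]) (map (\<lambda>c. [c]) x'')"
    by (simp add: foldl_Inr u x word_eval_def)
  also have "\<dots> = [Inr (word_eval T u)] @ foldl (fp_mul S T) [Inl b] (map (\<lambda>c. [c]) x'')"
    by (rule foldl_app) auto
  also have "\<dots> = Inr (word_eval T u) # fval S T x'" by (simp add: x fval_Cons)
  finally show ?thesis .
qed

lemma decompL: "x \<noteq> [] \<Longrightarrow> isl (hd x) \<Longrightarrow>
  \<exists>u x'. u \<noteq> [] \<and> x = map Inl u @ x' \<and> (x' = [] \<or> \<not> isl (hd x'))"
proof -
  assume a: "x \<noteq> []" "isl (hd x)"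
  have "map Inl (map projl (takeWhile isl x)) = takeWhile isl x"
    by (induction x) auto
  moreover have "takeWhile isl x \<noteq> []" using a by (cases x) auto
  moreover have "dropWhile isl x = [] \<or> \<not> isl (hd (dropWhile isl x))"
    using hd_dropWhile by blast
  ultimately show ?thesis
    by (intro exI[of _ "map projl (takeWhile isl x)"] exI[of _ "dropWhile isl x"]) auto
qed

lemma decompR: "x \<noteq> [] \<Longrightarrow> \<not> isl (hd x) \<Longrightarrow>
  \<exists>u x'. u \<noteq> [] \<and> x = map Inr u @ x' \<and> (x' = [] \<or> isl (hd x'))"
proof -
  assume a: "x \<noteq> []" "\<not> isl (hd x)"
  have "map Inr (map projr (takeWhile (Not \<circ> isl) x)) = takeWhile (Not \<circ> isl) x"
    by (induction x) auto
  moreover have "takeWhile (Not \<circ> isl) x \<noteq> []" using a by (cases x) auto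
  moreover have "dropWhile (Not \<circ> isl) x = [] \<or> isl (hd (dropWhile (Not \<circ> isl) x))"
    using hd_dropWhile[of "Not \<circ> isl" x] by auto
  ultimately show ?thesis
    by (intro exI[of _ "map projr (takeWhile (Not \<circ> isl) x)"] exI[of _ "dropWhile (Not \<circ> isl) x"]) auto
qed

lemma hd_fval: "x \<noteq> [] \<Longrightarrow> isl (hd (fval S T x)) = isl (hd x)"
proof (cases "isl (hd x)")
  case True
  assume "x \<noteq> []"
  from decompL[OF this True] obtain u x' where d: "u \<noteq> []" "x = map Inl u @ x'" "x' = [] \<or> \<not> isl (hd x')" by blast
  then show ?thesis using True
    by (cases "x' = []") (auto simp: fval_Inl_only fval_Inl_cons)
next
  case False
  assume "x \<noteq> []"
  from decompR[OF this False] obtain u x' where d: "u \<noteq> []" "x = map Inr u @ x'" "x' = [] \<or> isl (hd x')" by blast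
  then show ?thesis using False
    by (cases "x' = []") (auto simp: fval_Inr_only fval_Inr_cons)
qed

inductive EqA and EqB for S :: "'a sgrp" and T :: "'b sgrp" and A :: "'a set" and B :: "'b set" where
  EqA0: "u \<noteq> [] \<Longrightarrow> v \<noteq> [] \<Longrightarrow> set u \<subseteq> A \<Longrightarrow> set v \<subseteq> A \<Longrightarrow> word_eval S u = word_eval S v
     \<Longrightarrow> EqA S T A B (map Inl u) (map Inl v)"
| EqA1: "u \<noteq> [] \<Longrightarrow> v \<noteq> [] \<Longrightarrow> set u \<subseteq> A \<Longrightarrow> set v \<subseteq> A \<Longrightarrow> word_eval S u = word_eval S v
     \<Longrightarrow> EqB S T A B x y \<Longrightarrow> EqA S T A B (map Inl u @ x) (map Inl v @ y)"
| EqB0: "u \<noteq> [] \<Longrightarrow> v \<noteq> [] \<Longrightarrow> set u \<subseteq> B \<Longrightarrow> set v \<subseteq> B \<Longrightarrow> word_eval T u = word_eval T v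
     \<Longrightarrow> EqB S T A B (map Inr u) (map Inr v)"
| EqB1: "u \<noteq> [] \<Longrightarrow> v \<noteq> [] \<Longrightarrow> set u \<subseteq> B \<Longrightarrow> set v \<subseteq> B \<Longrightarrow> word_eval T u = word_eval T v
     \<Longrightarrow> EqA S T A B x y \<Longrightarrow> EqB S T A B (map Inr u @ x) (map Inr v @ y)"

lemma EqAB_props:
  "(EqA S T A B x y \<longrightarrow> x \<noteq> [] \<and> y \<noteq> [] \<and> isl (hd x) \<and> isl (hd y) \<and>
      set x \<subseteq> Inl ` A \<union> Inr ` B \<and> set y \<subseteq> Inl ` A \<union> Inr ` B \<and> fval S T x = fval S T y) \<and>
   (EqB S T A B x y \<longrightarrow> x \<noteq> [] \<and> y \<noteq> [] \<and> \<not> isl (hd x) \<and> \<not> isl (hd y) \<and>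
      set x \<subseteq> Inl ` A \<union> Inr ` B \<and> set y \<subseteq> Inl ` A \<union> Inr ` B \<and> fval S T x = fval S T y)"
proof (induction rule: EqA_EqB.induct)
  case (EqA0 u v)
  then show ?case by (auto simp: fval_Inl_only hd_map)
next
  case (EqA1 u v x y)
  then show ?case by (auto simp: fval_Inl_cons hd_map)
next
  case (EqB0 u v)
  then show ?case by (auto simp: fval_Inr_only hd_map)
next
  case (EqB1 u v x y)
  then show ?case by (auto simp: fval_Inr_cons hd_map)
qed

lemma setL: "set (map Inl u @ x') \<subseteq> Inl ` A \<union> Inr ` B \<Longrightarrow> set u \<subseteq> A \<and> set x' \<subseteq> Inl ` A \<union> Inr ` B"
  by auto
lemma setR: "set (map Inr u @ x') \<subseteq> Inl ` A \<union> Inr ` B \<Longrightarrow> set u \<subseteq> B \<and> set x' \<subseteq> Inl ` A \<union> Inr ` B"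
  by auto

lemma eq_imp_EqAB:
  "x \<noteq> [] \<Longrightarrow> y \<noteq> [] \<Longrightarrow> set x \<subseteq> Inl ` A \<union> Inr ` B \<Longrightarrow> set y \<subseteq> Inl ` A \<union> Inr ` B \<Longrightarrow>
   fval S T x = fval S T y \<Longrightarrow> EqA S T A B x y \<or> EqB S T A B x y"
proof (induction "length x" arbitrary: x y rule: less_induct)
  case less
  show ?case
  proof (cases "isl (hd x)")
    case True
    from decompL[OF less.prems(1) True] obtain u x' where
      dx: "u \<noteq> []" "x = map Inl u @ x'" "x' = [] \<or> \<not> isl (hd x')" by blast
    have hy: "isl (hd y)" using hd_fval[OF less.prems(1), of S T] hd_fval[OF less.prems(2), of S T] less.prems(5) True
      by simp
    from decompL[OF less.prems(2) hy] obtain v y' where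
      dy: "v \<noteq> []" "y = map Inl v @ y'" "y' = [] \<or> \<not> isl (hd y')" by blast
    have fx: "fval S T x = Inl (word_eval S u) # (if x' = [] then [] else fval S T x')"
      using dx by (auto simp: fval_Inl_only fval_Inl_cons)
    have fy: "fval S T y = Inl (word_eval S v) # (if y' = [] then [] else fval S T y')"
      using dy by (auto simp: fval_Inl_only fval_Inl_cons)
    have eq: "word_eval S u = word_eval S v" "(if x' = [] then [] else fval S T x') = (if y' = [] then [] else fval S T y')"
      using fx fy less.prems(5) by auto
    have sx: "set u \<subseteq> A" "set x' \<subseteq> Inl ` A \<union> Inr ` B" using setL less.prems(3) dx(2) by metis+
    have sy: "set v \<subseteq> A" "set y' \<subseteq> Inl ` A \<union> Inr ` B" using setL less.prems(4) dy(2) by metis+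
    show ?thesis
    proof (cases "x' = []")
      case True
      then have "y' = []" using eq(2) fval_ne by (metis)
      then show ?thesis using True dx dy sx sy eq EqA0[of u v A S T B] by auto
    next
      case False
      then have ny: "y' \<noteq> []" using eq(2) fval_ne by (metis)
      have "fval S T x' = fval S T y'" using eq(2) False ny by simp
      moreover have "length x' < length x" using dx by simp
      ultimately have "EqA S T A B x' y' \<or> EqB S T A B x' y'"
        using less.hyps False ny sx sy by blast
      moreover have "\<not> EqA S T A B x' y'" using EqAB_props dx(3) False by blast
      ultimately have "EqB S T A B x' y'" by blast
      then show ?thesis using dx dy sx sy eq EqA1[of u v A S T B] by auto
    qed
  next
    case False
    from decompR[OF less.prems(1) False] obtain u x' where
      dx: "u \<noteq> []" "x = map Inr u @ x'" "x' = [] \<or> isl (hd x')" by blast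
    have hy: "\<not> isl (hd y)" using hd_fval[OF less.prems(1), of S T] hd_fval[OF less.prems(2), of S T] less.prems(5) False
      by simp
    from decompR[OF less.prems(2) hy] obtain v y' where
      dy: "v \<noteq> []" "y = map Inr v @ y'" "y' = [] \<or> isl (hd y')" by blast
    have fx: "fval S T x = Inr (word_eval T u) # (if x' = [] then [] else fval S T x')"
      using dx by (auto simp: fval_Inr_only fval_Inr_cons)
    have fy: "fval S T y = Inr (word_eval T v) # (if y' = [] then [] else fval S T y')"
      using dy by (auto simp: fval_Inr_only fval_Inr_cons)
    have eq: "word_eval T u = word_eval T v" "(if x' = [] then [] else fval S T x') = (if y' = [] then [] else fval S T y')"
      using fx fy less.prems(5) by auto
    have sx: "set u \<subseteq> B" "set x' \<subseteq> Inl ` A \<union> Inr ` B" using setR less.prems(3) dx(2) by metis+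
    have sy: "set v \<subseteq> B" "set y' \<subseteq> Inl ` A \<union> Inr ` B" using setR less.prems(4) dy(2) by metis+
    show ?thesis
    proof (cases "x' = []")
      case True
      then have "y' = []" using eq(2) fval_ne by (metis)
      then show ?thesis using True dx dy sx sy eq EqB0[of u v B T S A] by auto
    next
      case False
      then have ny: "y' \<noteq> []" using eq(2) fval_ne by (metis)
      have "fval S T x' = fval S T y'" using eq(2) False ny by simp
      moreover have "length x' < length x" using dx by simp
      ultimately have "EqA S T A B x' y' \<or> EqB S T A B x' y'"
        using less.hyps False ny sx sy by blast
      moreover have "\<not> EqB S T A B x' y'" using EqAB_props dx(3) False by blast
      ultimately have "EqA S T A B x' y'" by blast
      then show ?thesis using dx dy sx sy eq EqB1[of u v B T S A] by auto
    qed
  qed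
qed

lemma fpm_single_L: "e \<noteq> [] \<Longrightarrow> x \<noteq> [] \<Longrightarrow> fp_mul S T e x = [Inl s] \<Longrightarrow>
   \<exists>a b. e = [Inl a] \<and> x = [Inl b] \<and> s = mul S a b"
  apply (cases e rule: rev_cases; cases x; simp)
  apply (auto simp: fp_mul_def append_eq_Cons_conv split: sum.splits)
  done

lemma fpm_single_R: "e \<noteq> [] \<Longrightarrow> x \<noteq> [] \<Longrightarrow> fp_mul S T e x = [Inr s] \<Longrightarrow>
   \<exists>a b. e = [Inr a] \<and> x = [Inr b] \<and> s = mul T a b"
  apply (cases e rule: rev_cases; cases x; simp)
  apply (auto simp: fp_mul_def append_eq_Cons_conv split: sum.splits)
  done

lemma word_eval_snoc: "w \<noteq> [] \<Longrightarrow> word_eval S (w @ [x]) = mul S (word_eval S w) x"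
  by (cases w) (auto simp: word_eval_def)

lemma word_eval_ne: "w \<noteq> [] \<Longrightarrow> \<forall>x\<in>set w. x \<noteq> [] \<Longrightarrow> word_eval (free_prod S T) w \<noteq> []"
  by (cases w) (auto simp: word_eval_def free_prod_def foldl_ne)

lemma single_L: "w \<noteq> [] \<Longrightarrow> \<forall>x\<in>set w. x \<noteq> [] \<Longrightarrow> word_eval (free_prod S T) w = [Inl s] \<Longrightarrow>
   \<exists>u. w = map (\<lambda>a. [Inl a]) u \<and> word_eval S u = s"
proof (induction w arbitrary: s rule: rev_induct)
  case Nil then show ?case by simp
next
  case (snoc x w)
  show ?case
  proof (cases "w = []")
    case True
    then show ?thesis using snoc.prems by (intro exI[of _ "[s]"]) (auto simp: word_eval_def)
  next
    case False
    have "word_eval (free_prod S T) (w @ [x]) = fp_mul S T (word_eval (free_prod S T) w) x"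
      using word_eval_snoc[OF False] by (simp add: free_prod_def)
    with snoc.prems have "fp_mul S T (word_eval (free_prod S T) w) x = [Inl s]" by simp
    from fpm_single_L[OF word_eval_ne[OF False] _ this] snoc.prems False obtain a b where
      ab: "word_eval (free_prod S T) w = [Inl a]" "x = [Inl b]" "s = mul S a b" by auto
    from snoc.IH[OF False _ ab(1)] snoc.prems obtain u where u: "w = map (\<lambda>a. [Inl a]) u" "word_eval S u = a"
      by auto
    have "u \<noteq> []" using u False by auto
    then show ?thesis using u ab by (intro exI[of _ "u @ [b]"]) (auto simp: word_eval_snoc)
  qed
qed

lemma single_R: "w \<noteq> [] \<Longrightarrow> \<forall>x\<in>set w. x \<noteq> [] \<Longrightarrow> word_eval (free_prod S T) w = [Inr s] \<Longrightarrow>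
   \<exists>u. w = map (\<lambda>a. [Inr a]) u \<and> word_eval T u = s"
proof (induction w arbitrary: s rule: rev_induct)
  case Nil then show ?case by simp
next
  case (snoc x w)
  show ?case
  proof (cases "w = []")
    case True
    then show ?thesis using snoc.prems by (intro exI[of _ "[s]"]) (auto simp: word_eval_def)
  next
    case False
    have "word_eval (free_prod S T) (w @ [x]) = fp_mul S T (word_eval (free_prod S T) w) x"
      using word_eval_snoc[OF False] by (simp add: free_prod_def)
    with snoc.prems have "fp_mul S T (word_eval (free_prod S T) w) x = [Inr s]" by simp
    from fpm_single_R[OF word_eval_ne[OF False] _ this] snoc.prems False obtain a b where
      ab: "word_eval (free_prod S T) w = [Inr a]" "x = [Inr b]" "s = mul T a b" by auto
    from snoc.IH[OF False _ ab(1)] snoc.prems obtain u where u: "w = map (\<lambda>a. [Inr a]) u" "word_eval T u = a"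
      by auto
    have "u \<noteq> []" using u False by auto
    then show ?thesis using u ab by (intro exI[of _ "u @ [b]"]) (auto simp: word_eval_snoc)
  qed
qed

lemma we_sgL: "u \<noteq> [] \<Longrightarrow> word_eval (free_prod S T) (map (\<lambda>a. [Inl a]) u) = [Inl (word_eval S u)]"
  using fval_Inl_only[of u S T] by (simp add: fval_def comp_def)
lemma we_sgR: "u \<noteq> [] \<Longrightarrow> word_eval (free_prod S T) (map (\<lambda>a. [Inr a]) u) = [Inr (word_eval T u)]"
  using fval_Inr_only[of u S T] by (simp add: fval_def comp_def)

lemma mapg_Some: "map (map_option f) w = map Some u' \<Longrightarrow> \<exists>u. w = map Some u \<and> u' = map f u"
proof (induction w arbitrary: u')
  case Nil then show ?case by simp
next
  case (Cons a w)
  then obtain b u'' where "u' = b # u''" by (cases u') auto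
  with Cons show ?case by (cases a) (auto, metis list.simps(9))
qed

lemma mapg_None: "map (map_option f) w = [None] \<Longrightarrow> w = [None]"
  by (cases w) auto

lemma WP_decomp: "map (map_option f) w = map Some u' @ [None] @ rev (map Some v') \<Longrightarrow>
  \<exists>u v. w = map Some u @ [None] @ rev (map Some v) \<and> u' = map f u \<and> v' = map f v"
proof -
  assume a: "map (map_option f) w = map Some u' @ [None] @ rev (map Some v')"
  then have "map (map_option f) w = map Some u' @ ([None] @ map Some (rev v'))" by (simp add: rev_map)
  then obtain w1 r where w1: "w = w1 @ r" "map Some u' = map (map_option f) w1"
     "[None] @ map Some (rev v') = map (map_option f) r" unfolding map_eq_append_conv by blast
  from w1(3) obtain w2 w3 where w23: "r = w2 @ w3" "[None] = map (map_option f) w2"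
     "map Some (rev v') = map (map_option f) w3" by (metis map_eq_append_conv)
  have w: "w = w1 @ w2 @ w3" "map (map_option f) w1 = map Some u'"
    "map (map_option f) w2 = [None]" "map (map_option f) w3 = map Some (rev v')"
    using w1 w23 by auto
  from mapg_Some[OF w(2)] obtain u where u: "w1 = map Some u" "u' = map f u" by blast
  from mapg_Some[OF w(4)] obtain v3 where v: "w3 = map Some v3" "rev v' = map f v3" by blast
  have "v' = map f (rev v3)" using v(2) by (metis rev_map rev_rev_ident)
  then show ?thesis using w(1) mapg_None[OF w(3)] u v
    by (intro exI[of _ u] exI[of _ "rev v3"]) (simp add: rev_map)
qed

lemma fp_carr_single_L[simp]: "[Inl a] \<in> fp_carr S T \<longleftrightarrow> a \<in> carr S"
  by (simp add: fp_carr_def)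
lemma fp_carr_single_R[simp]: "[Inr a] \<in> fp_carr S T \<longleftrightarrow> a \<in> carr T"
  by (simp add: fp_carr_def)
lemma fp_carr_ne: "x \<in> fp_carr S T \<Longrightarrow> x \<noteq> []"
  by (simp add: fp_carr_def)


lemma factor_S:
  assumes "U_CF (free_prod S T)"
  shows "U_CF S"
proof -
  from assms obtain A where A: "finite A" "generates (free_prod S T) A" "context_free (WP (free_prod S T) A)"
    unfolding U_CF_def by blast
  define AS where "AS = {a. [Inl a] \<in> A}"
  have "AS = (\<lambda>a. [Inl a]) -` A" by (auto simp: AS_def)
  moreover have "inj (\<lambda>a. [Inl a :: 'a + 'b])" by (simp add: inj_def)
  ultimately have finAS: "finite AS" using finite_vimageI[OF A(1)] by simp
  have Acarr: "A \<subseteq> fp_carr S T" using A(2) by (simp add: generates_def free_prod_def)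
  have "generates S AS"
    unfolding generates_def
  proof (intro conjI ballI)
    show "AS \<subseteq> carr S" using Acarr by (auto simp: AS_def)
  next
    fix s assume "s \<in> carr S"
    then have "[Inl s] \<in> carr (free_prod S T)" by (simp add: free_prod_def)
    with A(2) obtain w where w: "w \<noteq> []" "set w \<subseteq> A" "word_eval (free_prod S T) w = [Inl s]"
      unfolding generates_def by blast
    have "\<forall>x\<in>set w. x \<noteq> []" using w(2) Acarr fp_carr_ne by blast
    from single_L[OF w(1) this w(3)] obtain u where u: "w = map (\<lambda>a. [Inl a]) u" "word_eval S u = s" by blast
    then show "\<exists>w. w \<noteq> [] \<and> set w \<subseteq> AS \<and> word_eval S w = s"
      using w(1,2) by (intro exI[of _ u]) (auto simp: AS_def)
  qed
  moreover have "WP S AS = {w. map (map_option (\<lambda>a. [Inl a])) w \<in> WP (free_prod S T) A}"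
  proof (intro set_eqI iffI; simp)
    fix w assume "w \<in> WP S AS"
    then obtain u v where uv: "w = map Some u @ [None] @ rev (map Some v)" "u \<noteq> []" "v \<noteq> []"
      "set u \<subseteq> AS" "set v \<subseteq> AS" "word_eval S u = word_eval S v" unfolding WP_def by blast
    show "map (map_option (\<lambda>a. [Inl a])) w \<in> WP (free_prod S T) A"
      unfolding WP_def
      using uv we_sgL[of u S T] we_sgL[of v S T]
      by (intro CollectI exI[of _ "map (\<lambda>a. [Inl a]) u"] exI[of _ "map (\<lambda>a. [Inl a]) v"])
        (auto simp: AS_def rev_map)
  next
    fix w assume "map (map_option (\<lambda>a. [Inl a])) w \<in> WP (free_prod S T) A"
    then obtain u' v' where uv: "map (map_option (\<lambda>a. [Inl a])) w = map Some u' @ [None] @ rev (map Some v')" "u' \<noteq> []" "v' \<noteq> []"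
      "set u' \<subseteq> A" "set v' \<subseteq> A" "word_eval (free_prod S T) u' = word_eval (free_prod S T) v'"
      unfolding WP_def by blast
    from WP_decomp[OF uv(1)] obtain u v where d: "w = map Some u @ [None] @ rev (map Some v)"
      "u' = map (\<lambda>a. [Inl a]) u" "v' = map (\<lambda>a. [Inl a]) v" by blast
    have ne: "u \<noteq> []" "v \<noteq> []" using d uv by auto
    have "word_eval S u = word_eval S v" using uv(6) d we_sgL[OF ne(1), of S T] we_sgL[OF ne(2), of S T] by simp
    then show "w \<in> WP S AS" unfolding WP_def using d ne uv(4,5)
      by (intro CollectI exI[of _ u] exI[of _ v]) (auto simp: AS_def)
  qed
  moreover have "inj (map_option (\<lambda>a::'a. [Inl a :: 'a + 'b]))"
    by (rule option.inj_map) (simp add: inj_def)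
  ultimately have "context_free (WP S AS)" using cf_inv_map[OF _ A(3)] by simp
  with finAS \<open>generates S AS\<close> show ?thesis unfolding U_CF_def by blast
qed


lemma factor_T:
  assumes "U_CF (free_prod S T)"
  shows "U_CF T"
proof -
  from assms obtain A where A: "finite A" "generates (free_prod S T) A" "context_free (WP (free_prod S T) A)"
    unfolding U_CF_def by blast
  define AS where "AS = {a. [Inr a] \<in> A}"
  have "AS = (\<lambda>a. [Inr a]) -` A" by (auto simp: AS_def)
  moreover have "inj (\<lambda>a. [Inr a :: 'a + 'b])" by (simp add: inj_def)
  ultimately have finAS: "finite AS" using finite_vimageI[OF A(1)] by simp
  have Acarr: "A \<subseteq> fp_carr S T" using A(2) by (simp add: generates_def free_prod_def)
  have "generates T AS"
    unfolding generates_def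
  proof (intro conjI ballI)
    show "AS \<subseteq> carr T" using Acarr by (auto simp: AS_def)
  next
    fix s assume "s \<in> carr T"
    then have "[Inr s] \<in> carr (free_prod S T)" by (simp add: free_prod_def)
    with A(2) obtain w where w: "w \<noteq> []" "set w \<subseteq> A" "word_eval (free_prod S T) w = [Inr s]"
      unfolding generates_def by blast
    have "\<forall>x\<in>set w. x \<noteq> []" using w(2) Acarr fp_carr_ne by blast
    from single_R[OF w(1) this w(3)] obtain u where u: "w = map (\<lambda>a. [Inr a]) u" "word_eval T u = s" by blast
    then show "\<exists>w. w \<noteq> [] \<and> set w \<subseteq> AS \<and> word_eval T w = s"
      using w(1,2) by (intro exI[of _ u]) (auto simp: AS_def)
  qed
  moreover have "WP T AS = {w. map (map_option (\<lambda>a. [Inr a])) w \<in> WP (free_prod S T) A}"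
  proof (intro set_eqI iffI; simp)
    fix w assume "w \<in> WP T AS"
    then obtain u v where uv: "w = map Some u @ [None] @ rev (map Some v)" "u \<noteq> []" "v \<noteq> []"
      "set u \<subseteq> AS" "set v \<subseteq> AS" "word_eval T u = word_eval T v" unfolding WP_def by blast
    show "map (map_option (\<lambda>a. [Inr a])) w \<in> WP (free_prod S T) A"
      unfolding WP_def
      using uv we_sgR[of u S T] we_sgR[of v S T]
      by (intro CollectI exI[of _ "map (\<lambda>a. [Inr a]) u"] exI[of _ "map (\<lambda>a. [Inr a]) v"])
        (auto simp: AS_def rev_map)
  next
    fix w assume "map (map_option (\<lambda>a. [Inr a])) w \<in> WP (free_prod S T) A"
    then obtain u' v' where uv: "map (map_option (\<lambda>a. [Inr a])) w = map Some u' @ [None] @ rev (map Some v')" "u' \<noteq> []" "v' \<noteq> []"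
      "set u' \<subseteq> A" "set v' \<subseteq> A" "word_eval (free_prod S T) u' = word_eval (free_prod S T) v'"
      unfolding WP_def by blast
    from WP_decomp[OF uv(1)] obtain u v where d: "w = map Some u @ [None] @ rev (map Some v)"
      "u' = map (\<lambda>a. [Inr a]) u" "v' = map (\<lambda>a. [Inr a]) v" by blast
    have ne: "u \<noteq> []" "v \<noteq> []" using d uv by auto
    have "word_eval T u = word_eval T v" using uv(6) d we_sgR[OF ne(1), of S T] we_sgR[OF ne(2), of S T] by simp
    then show "w \<in> WP T AS" unfolding WP_def using d ne uv(4,5)
      by (intro CollectI exI[of _ u] exI[of _ v]) (auto simp: AS_def)
  qed
  moreover have "inj (map_option (\<lambda>a::'b. [Inr a :: 'a + 'b]))"
    by (rule option.inj_map) (simp add: inj_def)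
  ultimately have "context_free (WP T AS)" using cf_inv_map[OF _ A(3)] by simp
  with finAS \<open>generates T AS\<close> show ?thesis unfolding U_CF_def by blast
qed

definition Fw :: "('a + 'b) list \<Rightarrow> ('a + 'b) list \<Rightarrow> ('a + 'b) list option list" where
  "Fw x y = map Some (map (\<lambda>c. [c]) x) @ [None] @ rev (map Some (map (\<lambda>c. [c]) y))"

lemma Fw_L0: "Fw (map Inl u) (map Inl v) =
   map (\<lambda>a. Some [Inl a]) u @ [None] @ rev (map (\<lambda>a. Some [Inl a]) v)"
  by (simp add: Fw_def)
lemma Fw_R0: "Fw (map Inr u) (map Inr v) =
   map (\<lambda>a. Some [Inr a]) u @ [None] @ rev (map (\<lambda>a. Some [Inr a]) v)"
  by (simp add: Fw_def)
lemma Fw_L: "Fw (map Inl u @ x) (map Inl v @ y) =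
   map (\<lambda>a. Some [Inl a]) u @ Fw x y @ rev (map (\<lambda>a. Some [Inl a]) v)"
  by (simp add: Fw_def)
lemma Fw_R: "Fw (map Inr u @ x) (map Inr v @ y) =
   map (\<lambda>a. Some [Inr a]) u @ Fw x y @ rev (map (\<lambda>a. Some [Inr a]) v)"
  by (simp add: Fw_def)

lemma lists_Af: "set u \<subseteq> (\<lambda>a. [Inl a]) ` A \<union> (\<lambda>b. [Inr b]) ` B \<Longrightarrow>
   u = map (\<lambda>c. [c]) (map hd u) \<and> set (map hd u) \<subseteq> Inl ` A \<union> Inr ` B"
  by (induction u) auto

lemma WP_free:
  "WP (free_prod S T) ((\<lambda>a. [Inl a]) ` A \<union> (\<lambda>b. [Inr b]) ` B) =
     {Fw x y | x y. EqA S T A B x y \<or> EqB S T A B x y}"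
proof (intro set_eqI iffI)
  fix w assume "w \<in> WP (free_prod S T) ((\<lambda>a. [Inl a]) ` A \<union> (\<lambda>b. [Inr b]) ` B)"
  then obtain u v where uv: "w = map Some u @ [None] @ rev (map Some v)" "u \<noteq> []" "v \<noteq> []"
    "set u \<subseteq> (\<lambda>a. [Inl a]) ` A \<union> (\<lambda>b. [Inr b]) ` B" "set v \<subseteq> (\<lambda>a. [Inl a]) ` A \<union> (\<lambda>b. [Inr b]) ` B"
    "word_eval (free_prod S T) u = word_eval (free_prod S T) v" unfolding WP_def by blast
  note lu = lists_Af[OF uv(4)] and lv = lists_Af[OF uv(5)]
  have "fval S T (map hd u) = fval S T (map hd v)" unfolding fval_def using lu lv uv(6) by metis
  moreover have "map hd u \<noteq> []" "map hd v \<noteq> []" using uv by auto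
  ultimately have "EqA S T A B (map hd u) (map hd v) \<or> EqB S T A B (map hd u) (map hd v)"
    using eq_imp_EqAB lu lv by blast
  moreover have "w = Fw (map hd u) (map hd v)" unfolding Fw_def using uv(1) lu lv by metis
  ultimately show "w \<in> {Fw x y | x y. EqA S T A B x y \<or> EqB S T A B x y}" by blast
next
  fix w assume "w \<in> {Fw x y | x y. EqA S T A B x y \<or> EqB S T A B x y}"
  then obtain x y where xy: "w = Fw x y" "EqA S T A B x y \<or> EqB S T A B x y" by blast
  have p: "x \<noteq> [] \<and> y \<noteq> [] \<and> set x \<subseteq> Inl ` A \<union> Inr ` B \<and> set y \<subseteq> Inl ` A \<union> Inr ` B \<and> fval S T x = fval S T y"
    using EqAB_props xy(2) by blast
  have s: "set (map (\<lambda>c. [c]) z) \<subseteq> (\<lambda>a. [Inl a]) ` A \<union> (\<lambda>b. [Inr b]) ` B"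
    if "set z \<subseteq> Inl ` A \<union> Inr ` B" for z :: "('a + 'b) list" using that by auto
  show "w \<in> WP (free_prod S T) ((\<lambda>a. [Inl a]) ` A \<union> (\<lambda>b. [Inr b]) ` B)"
    unfolding WP_def using p s xy(1)
    by (intro CollectI exI[of _ "map (\<lambda>c. [c]) x"] exI[of _ "map (\<lambda>c. [c]) y"]) (simp add: Fw_def fval_def)
qed

lemma fp_carr_Cons: "c # xs \<in> fp_carr S T \<Longrightarrow>
  (case c of Inl a \<Rightarrow> a \<in> carr S | Inr b \<Rightarrow> b \<in> carr T) \<and>
  (xs = [] \<or> (xs \<in> fp_carr S T \<and> isl c \<noteq> isl (hd xs)))"
proof -
  assume a: "c # xs \<in> fp_carr S T"
  then have h: "\<forall>i. Suc i < length (c # xs) \<longrightarrow> isl ((c # xs) ! i) \<noteq> isl ((c # xs) ! Suc i)"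
    by (simp add: fp_carr_def)
  have "\<forall>i. Suc i < length xs \<longrightarrow> isl (xs ! i) \<noteq> isl (xs ! Suc i)"
  proof (intro allI impI)
    fix i assume "Suc i < length xs"
    then show "isl (xs ! i) \<noteq> isl (xs ! Suc i)" using h[rule_format, of "Suc i"] by simp
  qed
  moreover have "xs \<noteq> [] \<Longrightarrow> isl c \<noteq> isl (hd xs)"
    using h[rule_format, of 0] by (cases xs) auto
  ultimately show ?thesis using a by (auto simp: fp_carr_def)
qed

lemma gen_aux:
  assumes gS: "generates S A" and gT: "generates T B"
  shows "xs \<in> fp_carr S T \<Longrightarrow> \<exists>x. x \<noteq> [] \<and> set x \<subseteq> Inl ` A \<union> Inr ` B \<and> fval S T x = xs"
proof (induction xs)
  case Nil then show ?case by (simp add: fp_carr_def)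
next
  case (Cons c xs)
  note cc = fp_carr_Cons[OF Cons.prems]
  show ?case
  proof (cases c)
    case (Inl s)
    with cc have "s \<in> carr S" by simp
    with gS obtain u where u: "u \<noteq> []" "set u \<subseteq> A" "word_eval S u = s" unfolding generates_def by blast
    show ?thesis
    proof (cases "xs = []")
      case True
      then show ?thesis using u Inl by (intro exI[of _ "map Inl u"]) (auto simp: fval_Inl_only)
    next
      case False
      with cc Cons.IH obtain x' where x': "x' \<noteq> []" "set x' \<subseteq> Inl ` A \<union> Inr ` B" "fval S T x' = xs"
        by blast
      have "\<not> isl (hd x')" using hd_fval[OF x'(1), of S T] x'(3) cc False Inl by auto
      then show ?thesis using u Inl x' by (intro exI[of _ "map Inl u @ x'"]) (auto simp: fval_Inl_cons)
    qed
  next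
    case (Inr s)
    with cc have "s \<in> carr T" by simp
    with gT obtain u where u: "u \<noteq> []" "set u \<subseteq> B" "word_eval T u = s" unfolding generates_def by blast
    show ?thesis
    proof (cases "xs = []")
      case True
      then show ?thesis using u Inr by (intro exI[of _ "map Inr u"]) (auto simp: fval_Inr_only)
    next
      case False
      with cc Cons.IH obtain x' where x': "x' \<noteq> []" "set x' \<subseteq> Inl ` A \<union> Inr ` B" "fval S T x' = xs"
        by blast
      have "isl (hd x')" using hd_fval[OF x'(1), of S T] x'(3) cc False Inr by auto
      then show ?thesis using u Inr x' by (intro exI[of _ "map Inr u @ x'"]) (auto simp: fval_Inr_cons)
    qed
  qed
qed

lemma gen_free:
  assumes gS: "generates S A" and gT: "generates T B"
  shows "generates (free_prod S T) ((\<lambda>a. [Inl a]) ` A \<union> (\<lambda>b. [Inr b]) ` B)"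
  unfolding generates_def
proof (intro conjI ballI)
  show "(\<lambda>a. [Inl a]) ` A \<union> (\<lambda>b. [Inr b]) ` B \<subseteq> carr (free_prod S T)"
    using gS gT by (auto simp: generates_def free_prod_def)
next
  fix s assume "s \<in> carr (free_prod S T)"
  then have "s \<in> fp_carr S T" by (simp add: free_prod_def)
  from gen_aux[OF gS gT this] obtain x where x: "x \<noteq> []" "set x \<subseteq> Inl ` A \<union> Inr ` B" "fval S T x = s"
    by blast
  then show "\<exists>w. w \<noteq> [] \<and> set w \<subseteq> (\<lambda>a. [Inl a]) ` A \<union> (\<lambda>b. [Inr b]) ` B \<and> word_eval (free_prod S T) w = s"
    by (intro exI[of _ "map (\<lambda>c. [c]) x"]) (auto simp: fval_def)
qed

lemma la_some: "(\<And>a wc. R (Some a) wc \<Longrightarrow> wc = [f a]) \<Longrightarrow> list_all2 R (map Some u) ws \<Longrightarrow>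
   ws = map (\<lambda>a. [f a]) u"
proof (induction u arbitrary: ws)
  case Nil then show ?case by simp
next
  case (Cons a u)
  then show ?case by (cases ws) auto
qed

lemma concat_sing: "concat (map (\<lambda>a. [f a]) u) = map f u"
  by (induction u) auto

lemma la_split: "list_all2 R (map Some u @ [None] @ rev (map Some v)) ws \<Longrightarrow>
  \<exists>ws1 wm ws2. ws = ws1 @ [wm] @ ws2 \<and> list_all2 R (map Some u) ws1 \<and> R None wm \<and>
    list_all2 R (map Some (rev v)) ws2"
  by (auto simp: list_all2_append1 list_all2_Cons1 rev_map)

lemma term1: "(cfg_step Q ^^ k) [Inr c] (map Inr wc) \<Longrightarrow> wc = [c]"
proof -
  assume "(cfg_step Q ^^ k) [Inr c] (map Inr wc)"
  then have "(cfg_step Q ^^ k) (map Inr [c]) (map Inr wc)" by simp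
  from term_pow[OF this] show ?thesis by (auto simp: map_eq_Cons_conv)
qed

lemma ar_facts[simp]:
  "(4::nat) * X \<noteq> 2" "(4::nat) * X \<noteq> 3" "(4::nat) * X \<noteq> 6" "(2::nat) * X \<noteq> 3"
  "(4::nat) * X \<noteq> Suc (4 * a)" "Suc (4 * X) \<noteq> 2" "Suc (4 * X) \<noteq> 3" "Suc (4 * X) \<noteq> 6"
  "Suc (4 * X) \<noteq> 4 * a" "2 * X \<noteq> Suc (4 * a)" "(2::nat) \<noteq> 4 * X" "(3::nat) \<noteq> 4 * X" "(6::nat) \<noteq> 4 * X"
  "(2::nat) \<noteq> Suc (4 * X)" "(3::nat) \<noteq> Suc (4 * X)" "(6::nat) \<noteq> Suc (4 * X)" "(3::nat) \<noteq> 2 * X" "(4::nat) * X \<noteq> 5" "(5::nat) \<noteq> 4 * X"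
  by presburger+

lemma prod_cf:
  fixes P1 :: "(nat \<times> (nat + 'a option) list) set" and P2 :: "(nat \<times> (nat + 'b option) list) set"
    and S :: "'a sgrp" and T :: "'b sgrp"
  assumes fP1: "finite P1" and L1: "cfg_lang P1 s1 = WP S A"
    and fP2: "finite P2" and L2: "cfg_lang P2 s2 = WP T B"
  shows "context_free {Fw x y | x y. EqA S T A B x y \<or> EqB S T A B x y}"
proof -
  define t1 :: "'a option \<Rightarrow> nat + ('a + 'b) list option" where
    "t1 = (\<lambda>c. case c of None \<Rightarrow> Inl 2 | Some a \<Rightarrow> Inr (Some [Inl a]))"
  define t2 :: "'b option \<Rightarrow> nat + ('a + 'b) list option" where
    "t2 = (\<lambda>c. case c of None \<Rightarrow> Inl 3 | Some b \<Rightarrow> Inr (Some [Inr b]))"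
  define emb1 where "emb1 = case_sum (Inl \<circ> (\<lambda>n::nat. 4 * n)) t1"
  define emb2 where "emb2 = case_sum (Inl \<circ> (\<lambda>n::nat. 4 * n + 1)) t2"
  define Q :: "(nat \<times> (nat + ('a + 'b) list option) list) set" where
    "Q = (\<lambda>(n, \<alpha>). (4 * n, map emb1 \<alpha>)) ` P1 \<union> (\<lambda>(n, \<alpha>). (4 * n + 1, map emb2 \<alpha>)) ` P2 \<union>
      {(2, [Inr None]), (2, [Inl (4 * s2 + 1)]), (3, [Inr None]), (3, [Inl (4 * s1)]),
       (6, [Inl (4 * s1)]), (6, [Inl (4 * s2 + 1)])}"
  have fQ: "finite Q" unfolding Q_def using fP1 fP2 by simp
  have H1: "\<And>X \<alpha>. (4 * X, \<alpha>) \<in> Q \<Longrightarrow> \<exists>\<alpha>1. (X, \<alpha>1) \<in> P1 \<and> \<alpha> = map (case_sum (Inl \<circ> (\<lambda>n. 4 * n)) t1) \<alpha>1"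
    unfolding Q_def emb1_def by auto
  have H2: "\<And>X \<alpha>. (4 * X + 1, \<alpha>) \<in> Q \<Longrightarrow> \<exists>\<alpha>1. (X, \<alpha>1) \<in> P2 \<and> \<alpha> = map (case_sum (Inl \<circ> (\<lambda>n. 4 * n + 1)) t2) \<alpha>1"
    unfolding Q_def emb2_def by auto
  have Q2: "(2, \<alpha>) \<in> Q \<Longrightarrow> \<alpha> = [Inr None] \<or> \<alpha> = [Inl (4 * s2 + 1)]" for \<alpha>
    unfolding Q_def by auto
  have Q3: "(3, \<alpha>) \<in> Q \<Longrightarrow> \<alpha> = [Inr None] \<or> \<alpha> = [Inl (4 * s1)]" for \<alpha>
    unfolding Q_def by auto
  have Q6: "(6, \<alpha>) \<in> Q \<Longrightarrow> \<alpha> = [Inl (4 * s1)] \<or> \<alpha> = [Inl (4 * s2 + 1)]" for \<alpha>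
    unfolding Q_def by auto
  have sing: "(X, \<alpha>) \<in> Q \<Longrightarrow> cfg_step Q (l @ [Inl X] @ r) (l @ \<alpha> @ r)" for X \<alpha> l r
    unfolding cfg_step_def by blast
  have sing': "(X, \<alpha>) \<in> Q \<Longrightarrow> (cfg_step Q)\<^sup>*\<^sup>* (l @ [Inl X] @ r) (l @ \<alpha> @ r)" for X \<alpha> l r
    using sing by blast
  have e1: "\<And>n. emb1 (Inl n) = Inl (4 * n)" by (simp add: emb1_def)
  have e2: "\<And>n. emb2 (Inl n) = Inl (4 * n + 1)" by (simp add: emb2_def)
  have QP1: "\<And>A \<alpha>. (A, \<alpha>) \<in> P1 \<Longrightarrow> (4 * A, map emb1 \<alpha>) \<in> Q" unfolding Q_def by force
  have QP2: "\<And>A \<alpha>. (A, \<alpha>) \<in> P2 \<Longrightarrow> (4 * A + 1, map emb2 \<alpha>) \<in> Q" unfolding Q_def by force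
  have QS: "(2, [Inr None]) \<in> Q" "(2, [Inl (4 * s2 + 1)]) \<in> Q" "(3, [Inr None]) \<in> Q"
    "(3, [Inl (4 * s1)]) \<in> Q" "(6, [Inl (4 * s1)]) \<in> Q" "(6, [Inl (4 * s2 + 1)]) \<in> Q"
    unfolding Q_def by auto
  let ?LA = "{w. \<exists>x y. w = Fw x y \<and> EqA S T A B x y}"
  let ?LB = "{w. \<exists>x y. w = Fw x y \<and> EqB S T A B x y}"
  have fwd: "(EqA S T A B x y \<longrightarrow> (cfg_step Q)\<^sup>*\<^sup>* [Inl (4 * s1)] (map Inr (Fw x y))) \<and>
        (EqB S T A B x y \<longrightarrow> (cfg_step Q)\<^sup>*\<^sup>* [Inl (4 * s2 + 1)] (map Inr (Fw x y)))" for x y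
  proof (induction rule: EqA_EqB.induct)
    case (EqA0 u v)
    have "map Some u @ [None] @ rev (map Some v) \<in> cfg_lang P1 s1" using EqA0 L1 unfolding WP_def by blast
    then have "(cfg_step P1)\<^sup>*\<^sup>* [Inl s1] (map Inr (map Some u @ [None] @ rev (map Some v)))"
      by (simp add: cfg_lang_def)
    from emb_steps[of emb1 "\<lambda>n. 4 * n" P1 Q, OF e1 QP1 this]
    have "(cfg_step Q)\<^sup>*\<^sup>* [Inl (4 * s1)]
       (map (\<lambda>a. Inr (Some [Inl a])) u @ [Inl 2] @ map (\<lambda>a. Inr (Some [Inl a])) (rev v))"
      by (simp add: emb1_def t1_def rev_map comp_def)
    also have "(cfg_step Q)\<^sup>*\<^sup>* \<dots> (map (\<lambda>a. Inr (Some [Inl a])) u @ [Inr None] @ map (\<lambda>a. Inr (Some [Inl a])) (rev v))"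
      by (rule sing'[OF QS(1)])
    finally show ?case by (simp add: Fw_L0 rev_map comp_def)
  next
    case (EqA1 u v x y)
    have "map Some u @ [None] @ rev (map Some v) \<in> cfg_lang P1 s1" using EqA1 L1 unfolding WP_def by blast
    then have "(cfg_step P1)\<^sup>*\<^sup>* [Inl s1] (map Inr (map Some u @ [None] @ rev (map Some v)))"
      by (simp add: cfg_lang_def)
    from emb_steps[of emb1 "\<lambda>n. 4 * n" P1 Q, OF e1 QP1 this]
    have "(cfg_step Q)\<^sup>*\<^sup>* [Inl (4 * s1)]
       (map (\<lambda>a. Inr (Some [Inl a])) u @ [Inl 2] @ map (\<lambda>a. Inr (Some [Inl a])) (rev v))"
      by (simp add: emb1_def t1_def rev_map comp_def)
    also have "(cfg_step Q)\<^sup>*\<^sup>* \<dots> (map (\<lambda>a. Inr (Some [Inl a])) u @ [Inl (4 * s2 + 1)] @ map (\<lambda>a. Inr (Some [Inl a])) (rev v))"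
      by (rule sing'[OF QS(2)])
    also have "(cfg_step Q)\<^sup>*\<^sup>* \<dots> (map (\<lambda>a. Inr (Some [Inl a])) u @ map Inr (Fw x y) @ map (\<lambda>a. Inr (Some [Inl a])) (rev v))"
      by (rule steps_ctx) (use EqA1 in blast)
    finally show ?case by (simp add: Fw_L rev_map comp_def)
  next
    case (EqB0 u v)
    have "map Some u @ [None] @ rev (map Some v) \<in> cfg_lang P2 s2" using EqB0 L2 unfolding WP_def by blast
    then have "(cfg_step P2)\<^sup>*\<^sup>* [Inl s2] (map Inr (map Some u @ [None] @ rev (map Some v)))"
      by (simp add: cfg_lang_def)
    from emb_steps[of emb2 "\<lambda>n. 4 * n + 1" P2 Q, OF e2 QP2 this]
    have "(cfg_step Q)\<^sup>*\<^sup>* [Inl (4 * s2 + 1)]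
       (map (\<lambda>a. Inr (Some [Inr a])) u @ [Inl 3] @ map (\<lambda>a. Inr (Some [Inr a])) (rev v))"
      by (simp add: emb2_def t2_def rev_map comp_def)
    also have "(cfg_step Q)\<^sup>*\<^sup>* \<dots> (map (\<lambda>a. Inr (Some [Inr a])) u @ [Inr None] @ map (\<lambda>a. Inr (Some [Inr a])) (rev v))"
      by (rule sing'[OF QS(3)])
    finally show ?case by (simp add: Fw_R0 rev_map comp_def)
  next
    case (EqB1 u v x y)
    have "map Some u @ [None] @ rev (map Some v) \<in> cfg_lang P2 s2" using EqB1 L2 unfolding WP_def by blast
    then have "(cfg_step P2)\<^sup>*\<^sup>* [Inl s2] (map Inr (map Some u @ [None] @ rev (map Some v)))"
      by (simp add: cfg_lang_def)
    from emb_steps[of emb2 "\<lambda>n. 4 * n + 1" P2 Q, OF e2 QP2 this]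
    have "(cfg_step Q)\<^sup>*\<^sup>* [Inl (4 * s2 + 1)]
       (map (\<lambda>a. Inr (Some [Inr a])) u @ [Inl 3] @ map (\<lambda>a. Inr (Some [Inr a])) (rev v))"
      by (simp add: emb2_def t2_def rev_map comp_def)
    also have "(cfg_step Q)\<^sup>*\<^sup>* \<dots> (map (\<lambda>a. Inr (Some [Inr a])) u @ [Inl (4 * s1)] @ map (\<lambda>a. Inr (Some [Inr a])) (rev v))"
      by (rule sing'[OF QS(4)])
    also have "(cfg_step Q)\<^sup>*\<^sup>* \<dots> (map (\<lambda>a. Inr (Some [Inr a])) u @ map Inr (Fw x y) @ map (\<lambda>a. Inr (Some [Inr a])) (rev v))"
      by (rule steps_ctx) (use EqB1 in blast)
    finally show ?case by (simp add: Fw_R rev_map comp_def)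
  qed
  have bwd: "\<forall>w. ((cfg_step Q ^^ k) [Inl 2] (map Inr w) \<longrightarrow> w = [None] \<or> w \<in> ?LB) \<and>
      ((cfg_step Q ^^ k) [Inl 3] (map Inr w) \<longrightarrow> w = [None] \<or> w \<in> ?LA) \<and>
      ((cfg_step Q ^^ k) [Inl (4 * s1)] (map Inr w) \<longrightarrow> w \<in> ?LA) \<and>
      ((cfg_step Q ^^ k) [Inl (4 * s2 + 1)] (map Inr w) \<longrightarrow> w \<in> ?LB)" for k
  proof (induction k rule: less_induct)
    case (less k)
    have c2: "w = [None] \<or> w \<in> ?LB" if d: "(cfg_step Q ^^ k) [Inl 2] (map Inr w)" for w
    proof -
      from first_pow[OF d] obtain k' \<alpha> where f: "k = Suc k'" "(2, \<alpha>) \<in> Q" "(cfg_step Q ^^ k') \<alpha> (map Inr w)" by blast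
      from Q2[OF f(2)] show ?thesis
      proof
        assume "\<alpha> = [Inr None]"
        then show ?thesis using term1[of k' Q None w] f(3) by simp
      next
        assume "\<alpha> = [Inl (4 * s2 + 1)]"
        moreover have "k' < k" using f(1) by simp
        ultimately show ?thesis using less.IH[of k'] f(3) by blast
      qed
    qed
    have c3: "w = [None] \<or> w \<in> ?LA" if d: "(cfg_step Q ^^ k) [Inl 3] (map Inr w)" for w
    proof -
      from first_pow[OF d] obtain k' \<alpha> where f: "k = Suc k'" "(3, \<alpha>) \<in> Q" "(cfg_step Q ^^ k') \<alpha> (map Inr w)" by blast
      from Q3[OF f(2)] show ?thesis
      proof
        assume "\<alpha> = [Inr None]"
        then show ?thesis using term1[of k' Q None w] f(3) by simp
      next
        assume "\<alpha> = [Inl (4 * s1)]"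
        moreover have "k' < k" using f(1) by simp
        ultimately show ?thesis using less.IH[of k'] f(3) by blast
      qed
    qed

    have c4A: "w \<in> ?LA" if d: "(cfg_step Q ^^ k) [Inl (4 * s1)] (map Inr w)" for w
    proof -
      from first_pow[OF d] obtain k' \<alpha> where f: "k = Suc k'" "(4 * s1, \<alpha>) \<in> Q" "(cfg_step Q ^^ k') \<alpha> (map Inr w)" by blast
      from H1[OF f(2)] obtain \<alpha>1 where a1: "(s1, \<alpha>1) \<in> P1" "\<alpha> = map (case_sum (Inl \<circ> (\<lambda>n. 4 * n)) t1) \<alpha>1" by blast
      from back_emb[where e="\<lambda>n. 4 * n" and t=t1 and Q=Q and P=P1, OF H1, of k' \<alpha>1 w] f(3) a1(2)
      obtain z ws where b: "(cfg_step P1)\<^sup>*\<^sup>* \<alpha>1 (map Inr z)"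
        "list_all2 (\<lambda>c wc. \<exists>k''\<le>k'. (cfg_step Q ^^ k'') [t1 c] (map Inr wc)) z ws" "w = concat ws" by blast
      let ?R = "\<lambda>c wc. \<exists>k''\<le>k'. (cfg_step Q ^^ k'') [t1 c] (map Inr wc)"
      have "cfg_step P1 [Inl s1] \<alpha>1" using a1(1) unfolding cfg_step_def
        by (intro exI[of _ "[]"] exI[of _ s1] exI[of _ "[]"] exI[of _ \<alpha>1]) simp
      with b(1) have "(cfg_step P1)\<^sup>*\<^sup>* [Inl s1] (map Inr z)" by (simp add: converse_rtranclp_into_rtranclp)
      then have "z \<in> cfg_lang P1 s1" unfolding cfg_lang_def by simp
      then have "z \<in> WP S A" using L1 by simp
      then obtain u v where uv: "z = map Some u @ [None] @ rev (map Some v)" "u \<noteq> []" "v \<noteq> []"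
        "set u \<subseteq> A" "set v \<subseteq> A" "word_eval S u = word_eval S v" unfolding WP_def by blast
      from la_split[OF b(2)[unfolded uv(1)]] obtain ws1 wm ws2 where sp: "ws = ws1 @ [wm] @ ws2"
        "list_all2 ?R (map Some u) ws1" "?R None wm" "list_all2 ?R (map Some (rev v)) ws2" by blast
      have Rs: "wc = [Some [Inl a]]" if "?R (Some a) wc" for a wc
        using that term1[of _ Q "Some [Inl a]" wc] by (auto simp: t1_def)
      have ws1: "ws1 = map (\<lambda>a. [Some [Inl a]]) u" by (rule la_some[OF Rs sp(2)])
      have ws2: "ws2 = map (\<lambda>a. [Some [Inl a]]) (rev v)" by (rule la_some[OF Rs sp(4)])
      from sp(3) obtain k'' where k'': "k'' \<le> k'" "(cfg_step Q ^^ k'') [Inl 2] (map Inr wm)"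
        by (auto simp: t1_def)
      have "k'' < k" using k'' f(1) by simp
      from less.IH[OF this] k''(2) have wm: "wm = [None] \<or> wm \<in> ?LB" by blast
      have w: "w = map (\<lambda>a. Some [Inl a]) u @ wm @ rev (map (\<lambda>a. Some [Inl a]) v)"
        using b(3) sp(1) ws1 ws2 by (simp add: concat_sing rev_map)
      from wm show ?thesis
      proof
        assume "wm = [None]"
        then have "w = Fw (map Inl u) (map Inl v)" unfolding Fw_L0 using w by simp
        moreover have "EqA S T A B (map Inl u) (map Inl v)" using uv by (intro EqA0) auto
        ultimately show ?thesis by blast
      next
        assume "wm \<in> ?LB"
        then obtain x y where xy: "wm = Fw x y" "EqB S T A B x y" by blast
        then have "w = Fw (map Inl u @ x) (map Inl v @ y)" unfolding Fw_L using w by simp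
        moreover have "EqA S T A B (map Inl u @ x) (map Inl v @ y)" using uv xy(2) by (intro EqA1) auto
        ultimately show ?thesis by blast
      qed
    qed

    have c4B: "w \<in> ?LB" if d: "(cfg_step Q ^^ k) [Inl (4 * s2 + 1)] (map Inr w)" for w
    proof -
      from first_pow[OF d] obtain k' \<alpha> where f: "k = Suc k'" "(4 * s2 + 1, \<alpha>) \<in> Q" "(cfg_step Q ^^ k') \<alpha> (map Inr w)" by blast
      from H2[OF f(2)] obtain \<alpha>1 where a1: "(s2, \<alpha>1) \<in> P2" "\<alpha> = map (case_sum (Inl \<circ> (\<lambda>n. 4 * n + 1)) t2) \<alpha>1" by blast
      from back_emb[where e="\<lambda>n. 4 * n + 1" and t=t2 and Q=Q and P=P2, OF H2, of k' \<alpha>1 w] f(3) a1(2)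
      obtain z ws where b: "(cfg_step P2)\<^sup>*\<^sup>* \<alpha>1 (map Inr z)"
        "list_all2 (\<lambda>c wc. \<exists>k''\<le>k'. (cfg_step Q ^^ k'') [t2 c] (map Inr wc)) z ws" "w = concat ws" by blast
      let ?R = "\<lambda>c wc. \<exists>k''\<le>k'. (cfg_step Q ^^ k'') [t2 c] (map Inr wc)"
      have "cfg_step P2 [Inl s2] \<alpha>1" using a1(1) unfolding cfg_step_def
        by (intro exI[of _ "[]"] exI[of _ s2] exI[of _ "[]"] exI[of _ \<alpha>1]) simp
      with b(1) have "(cfg_step P2)\<^sup>*\<^sup>* [Inl s2] (map Inr z)" by (simp add: converse_rtranclp_into_rtranclp)
      then have "z \<in> cfg_lang P2 s2" unfolding cfg_lang_def by simp
      then have "z \<in> WP T B" using L2 by simp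
      then obtain u v where uv: "z = map Some u @ [None] @ rev (map Some v)" "u \<noteq> []" "v \<noteq> []"
        "set u \<subseteq> B" "set v \<subseteq> B" "word_eval T u = word_eval T v" unfolding WP_def by blast
      from la_split[OF b(2)[unfolded uv(1)]] obtain ws1 wm ws2 where sp: "ws = ws1 @ [wm] @ ws2"
        "list_all2 ?R (map Some u) ws1" "?R None wm" "list_all2 ?R (map Some (rev v)) ws2" by blast
      have Rs: "wc = [Some [Inr a]]" if "?R (Some a) wc" for a wc
        using that term1[of _ Q "Some [Inr a]" wc] by (auto simp: t2_def)
      have ws1: "ws1 = map (\<lambda>a. [Some [Inr a]]) u" by (rule la_some[OF Rs sp(2)])
      have ws2: "ws2 = map (\<lambda>a. [Some [Inr a]]) (rev v)" by (rule la_some[OF Rs sp(4)])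
      from sp(3) obtain k'' where k'': "k'' \<le> k'" "(cfg_step Q ^^ k'') [Inl 3] (map Inr wm)"
        by (auto simp: t2_def)
      have "k'' < k" using k'' f(1) by simp
      from less.IH[OF this] k''(2) have wm: "wm = [None] \<or> wm \<in> ?LA" by blast
      have w: "w = map (\<lambda>a. Some [Inr a]) u @ wm @ rev (map (\<lambda>a. Some [Inr a]) v)"
        using b(3) sp(1) ws1 ws2 by (simp add: concat_sing rev_map)
      from wm show ?thesis
      proof
        assume "wm = [None]"
        then have "w = Fw (map Inr u) (map Inr v)" unfolding Fw_R0 using w by simp
        moreover have "EqB S T A B (map Inr u) (map Inr v)" using uv by (intro EqB0) auto
        ultimately show ?thesis by blast
      next
        assume "wm \<in> ?LA"
        then obtain x y where xy: "wm = Fw x y" "EqA S T A B x y" by blast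
        then have "w = Fw (map Inr u @ x) (map Inr v @ y)" unfolding Fw_R using w by simp
        moreover have "EqB S T A B (map Inr u @ x) (map Inr v @ y)" using uv xy(2) by (intro EqB1) auto
        ultimately show ?thesis by blast
      qed
    qed

    show ?case using c2 c3 c4A c4B by blast
  qed
  have "cfg_lang Q 6 = {Fw x y | x y. EqA S T A B x y \<or> EqB S T A B x y}"
  proof (intro set_eqI iffI)
    fix w assume "w \<in> cfg_lang Q 6"
    then have "(cfg_step Q)\<^sup>*\<^sup>* [Inl 6] (map Inr w)" by (simp add: cfg_lang_def)
    from rtranclp_imp_relpowp[OF this] obtain k where "(cfg_step Q ^^ k) [Inl 6] (map Inr w)" by (elim exE)
    from first_pow[OF this] obtain k' \<alpha> where f: "(6, \<alpha>) \<in> Q" "(cfg_step Q ^^ k') \<alpha> (map Inr w)"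
      by (elim exE conjE)
    note bk0 = spec[OF bwd[of k'], of w]
    note bk = bk0[THEN conjunct2, THEN conjunct2, THEN conjunct1] bk0[THEN conjunct2, THEN conjunct2, THEN conjunct2]
    from Q6[OF f(1)] have "w \<in> ?LA \<or> w \<in> ?LB"
    proof
      assume "\<alpha> = [Inl (4 * s1)]" then show ?thesis using bk f(2) by simp
    next
      assume "\<alpha> = [Inl (4 * s2 + 1)]" then show ?thesis using bk f(2) by simp
    qed
    then show "w \<in> {Fw x y | x y. EqA S T A B x y \<or> EqB S T A B x y}" by blast
  next
    fix w assume "w \<in> {Fw x y | x y. EqA S T A B x y \<or> EqB S T A B x y}"
    then obtain x y where xy: "w = Fw x y" "EqA S T A B x y \<or> EqB S T A B x y" by blast
    have s6a: "(cfg_step Q)\<^sup>*\<^sup>* [Inl 6] [Inl (4 * s1)]" using sing'[OF QS(5), of "[]" "[]"] by simp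
    have s6b: "(cfg_step Q)\<^sup>*\<^sup>* [Inl 6] [Inl (4 * s2 + 1)]" using sing'[OF QS(6), of "[]" "[]"] by simp
    from xy(2) have "(cfg_step Q)\<^sup>*\<^sup>* [Inl 6] (map Inr w)"
    proof
      assume "EqA S T A B x y"
      then have "(cfg_step Q)\<^sup>*\<^sup>* [Inl (4 * s1)] (map Inr w)" using fwd[of x y] xy(1) by blast
      with s6a show ?thesis by (rule rtranclp_trans)
    next
      assume "EqB S T A B x y"
      then have "(cfg_step Q)\<^sup>*\<^sup>* [Inl (4 * s2 + 1)] (map Inr w)" using fwd[of x y] xy(1) by blast
      with s6b show ?thesis by (rule rtranclp_trans)
    qed
    then show "w \<in> cfg_lang Q 6" by (simp add: cfg_lang_def)
  qed
  then show ?thesis unfolding context_free_def using fQ by (intro exI[of _ Q] exI[of _ "6::nat"] conjI)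
qed

lemma prod_U:
  fixes S :: "'a sgrp" and T :: "'b sgrp"
  assumes "U_CF S" "U_CF T"
  shows "U_CF (free_prod S T)"
proof -
  from assms(1) obtain A where A: "finite A" "generates S A" "context_free (WP S A)"
    unfolding U_CF_def by blast
  from A(3) obtain P1 :: "(nat \<times> (nat + 'a option) list) set" and s1 where P1: "finite P1" "cfg_lang P1 s1 = WP S A"
    unfolding context_free_def by blast
  from assms(2) obtain B where B: "finite B" "generates T B" "context_free (WP T B)"
    unfolding U_CF_def by blast
  from B(3) obtain P2 :: "(nat \<times> (nat + 'b option) list) set" and s2 where P2: "finite P2" "cfg_lang P2 s2 = WP T B"
    unfolding context_free_def by blast
  have "finite ((\<lambda>a. [Inl a :: 'a + 'b]) ` A \<union> (\<lambda>b. [Inr b]) ` B)" using A(1) B(1) by simp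
  moreover have "generates (free_prod S T) ((\<lambda>a. [Inl a]) ` A \<union> (\<lambda>b. [Inr b]) ` B)"
    by (rule gen_free[OF A(2) B(2)])
  moreover have "context_free (WP (free_prod S T) ((\<lambda>a. [Inl a]) ` A \<union> (\<lambda>b. [Inr b]) ` B))"
    unfolding WP_free using prod_cf[OF P1(1) P1(2) P2(1) P2(2)] .
  ultimately show ?thesis unfolding U_CF_def by blast
qed

theorem mainTheorem9:
  fixes S :: "'a sgrp" and T :: "'b sgrp"
  assumes "semigrp S" and "semigrp T"
  shows "U_CF (free_prod S T) \<longleftrightarrow> U_CF S \<and> U_CF T"
  using factor_S[of S T] factor_T[of S T] prod_U[of S T] by blast

end
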